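(* Let $X$ be a Tychonoff space. The following are equivalent: (1) $C_m(X)$ is $\sigma$-compact; (2) $C_m(X)$ is strictly H-bounded; (3) $C_m(X)$ is H-bounded; (4) $C_m(X)$ is strictly M-bounded; (5) $C_m(X)$ is M-bounded; (6) $C_u(X)$ is M-bounded; (7) $X$ is finite; (8) $C_p(X)$ is $\sigma$-compact.
   Context: $C(X)$ is the set of continuous real-valued functions on $X$, a topological group under pointwise addition with identity the zero function. $C_p(X)$: pointwise convergence topology. $C_u(X)$: uniform convergence topology (basic neighborhoods $\{g:|g(x)-f(x)|<\varepsilon\ \forall x\in X\}$, $\varepsilon>0$). $C_m(X)$: $m$-topology (basic neighborhoods $\{g:|g(x)-f(x)|<\varepsilon(x)\ \forall x\}$, $\varepsilon\in C(X)$ strictly positive). For a topological group $G$ with identity $e$: M-bounded means for every sequence $(U_n)$ of neighborhoods of $e$ there are finite $A_n\subset G$ with $G=\bigcup_nA_nU_n$; H-bounded means there are finite $A_n$ with each $x\in G$ in all but finitely many $A_nU_n$. In the game where in round $n$ ONE picks a neighborhood $U_n$ of $e$ and TWO a finite $A_n\subset G$, $G$ is strictly M-bounded (resp. strictly H-bounded) if TWO has a strategy guaranteeing $G=\bigcup_nA_nU_n$ (resp. each $x\in G$ lies in all but finitely many $A_nU_n$). *)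

theory Defs
  imports "HOL-Analysis.Analysis" "HOL-Library.Function_Algebras"
begin

definition tychonoff_space :: "'a topology \<Rightarrow> bool" where
  "tychonoff_space X \<longleftrightarrow> completely_regular_space X \<and> Hausdorff_space X"

text \<open>C(X): continuous real functions on X, normalised to 0 outside the carrier of X
  (so that the group operations are pointwise + and the zero function).\<close>
definition Cfun :: "'a topology \<Rightarrow> ('a \<Rightarrow> real) set" where
  "Cfun X = {f. continuous_map X euclideanreal f \<and> (\<forall>x. x \<notin> topspace X \<longrightarrow> f x = 0)}"

definition Cp :: "'a topology \<Rightarrow> ('a \<Rightarrow> real) topology" where
  "Cp X = topology (\<lambda>U. U \<subseteq> Cfun X \<and> (\<forall>f\<in>U. \<exists>F \<epsilon>. finite F \<and> F \<subseteq> topspace X \<and> \<epsilon> > 0 \<and>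
      {g \<in> Cfun X. \<forall>x\<in>F. \<bar>g x - f x\<bar> < \<epsilon>} \<subseteq> U))"

definition Cu :: "'a topology \<Rightarrow> ('a \<Rightarrow> real) topology" where
  "Cu X = topology (\<lambda>U. U \<subseteq> Cfun X \<and> (\<forall>f\<in>U. \<exists>\<epsilon>::real. \<epsilon> > 0 \<and>
      {g \<in> Cfun X. \<forall>x\<in>topspace X. \<bar>g x - f x\<bar> < \<epsilon>} \<subseteq> U))"

definition Cm :: "'a topology \<Rightarrow> ('a \<Rightarrow> real) topology" where
  "Cm X = topology (\<lambda>U. U \<subseteq> Cfun X \<and> (\<forall>f\<in>U. \<exists>\<epsilon>. continuous_map X euclideanreal \<epsilon> \<and>
      (\<forall>x\<in>topspace X. \<epsilon> x > 0) \<and>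
      {g \<in> Cfun X. \<forall>x\<in>topspace X. \<bar>g x - f x\<bar> < \<epsilon> x} \<subseteq> U))"

definition nbhd0 :: "('b::{plus,zero}) topology \<Rightarrow> 'b set \<Rightarrow> bool" where
  "nbhd0 G U \<longleftrightarrow> U \<subseteq> topspace G \<and> (\<exists>V. openin G V \<and> 0 \<in> V \<and> V \<subseteq> U)"

definition setplus :: "('b::plus) set \<Rightarrow> 'b set \<Rightarrow> 'b set" where
  "setplus A U = {a + u | a u. a \<in> A \<and> u \<in> U}"

definition sigma_compact :: "'b topology \<Rightarrow> bool" where
  "sigma_compact G \<longleftrightarrow> (\<exists>K::nat \<Rightarrow> 'b set. (\<forall>n. compactin G (K n)) \<and> topspace G = (\<Union>n. K n))"

definition M_bounded :: "('b::{plus,zero}) topology \<Rightarrow> bool" where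
  "M_bounded G \<longleftrightarrow> (\<forall>U::nat \<Rightarrow> 'b set. (\<forall>n. nbhd0 G (U n)) \<longrightarrow>
     (\<exists>A. (\<forall>n. finite (A n) \<and> A n \<subseteq> topspace G) \<and>
          topspace G = (\<Union>n. setplus (A n) (U n))))"

definition H_bounded :: "('b::{plus,zero}) topology \<Rightarrow> bool" where
  "H_bounded G \<longleftrightarrow> (\<forall>U::nat \<Rightarrow> 'b set. (\<forall>n. nbhd0 G (U n)) \<longrightarrow>
     (\<exists>A. (\<forall>n. finite (A n) \<and> A n \<subseteq> topspace G) \<and>
          (\<forall>x\<in>topspace G. \<forall>\<^sub>F n in sequentially. x \<in> setplus (A n) (U n))))"

text \<open>Games: a strategy of TWO maps the list of ONE's moves so far [U 0, ..., U n]
  to TWO's finite set A n.\<close>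
definition strictly_M_bounded :: "('b::{plus,zero}) topology \<Rightarrow> bool" where
  "strictly_M_bounded G \<longleftrightarrow> (\<exists>\<sigma>::'b set list \<Rightarrow> 'b set.
     \<forall>U::nat \<Rightarrow> 'b set. (\<forall>n. nbhd0 G (U n)) \<longrightarrow>
       (\<forall>n. finite (\<sigma> (map U [0..<Suc n])) \<and> \<sigma> (map U [0..<Suc n]) \<subseteq> topspace G) \<and>
       topspace G = (\<Union>n. setplus (\<sigma> (map U [0..<Suc n])) (U n)))"

definition strictly_H_bounded :: "('b::{plus,zero}) topology \<Rightarrow> bool" where
  "strictly_H_bounded G \<longleftrightarrow> (\<exists>\<sigma>::'b set list \<Rightarrow> 'b set.
     \<forall>U::nat \<Rightarrow> 'b set. (\<forall>n. nbhd0 G (U n)) \<longrightarrow>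
       (\<forall>n. finite (\<sigma> (map U [0..<Suc n])) \<and> \<sigma> (map U [0..<Suc n]) \<subseteq> topspace G) \<and>
       (\<forall>x\<in>topspace G. \<forall>\<^sub>F n in sequentially. x \<in> setplus (\<sigma> (map U [0..<Suc n])) (U n)))"

end

theory Submission
  imports Defs
begin


definition PCm :: "'a topology \<Rightarrow> ('a \<Rightarrow> real) set \<Rightarrow> bool" where
  "PCm X U \<longleftrightarrow> U \<subseteq> Cfun X \<and> (\<forall>f\<in>U. \<exists>\<epsilon>. continuous_map X euclideanreal \<epsilon> \<and>
      (\<forall>x\<in>topspace X. \<epsilon> x > 0) \<and>
      {g \<in> Cfun X. \<forall>x\<in>topspace X. \<bar>g x - f x\<bar> < \<epsilon> x} \<subseteq> U)"

definition PCu :: "'a topology \<Rightarrow> ('a \<Rightarrow> real) set \<Rightarrow> bool" where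
  "PCu X U \<longleftrightarrow> U \<subseteq> Cfun X \<and> (\<forall>f\<in>U. \<exists>\<epsilon>::real. \<epsilon> > 0 \<and>
      {g \<in> Cfun X. \<forall>x\<in>topspace X. \<bar>g x - f x\<bar> < \<epsilon>} \<subseteq> U)"

definition PCp :: "'a topology \<Rightarrow> ('a \<Rightarrow> real) set \<Rightarrow> bool" where
  "PCp X U \<longleftrightarrow> U \<subseteq> Cfun X \<and> (\<forall>f\<in>U. \<exists>F \<epsilon>. finite F \<and> F \<subseteq> topspace X \<and> \<epsilon> > 0 \<and>
      {g \<in> Cfun X. \<forall>x\<in>F. \<bar>g x - f x\<bar> < \<epsilon>} \<subseteq> U)"

lemma Cm_eq: "Cm X = topology (PCm X)" unfolding Cm_def PCm_def[abs_def] by (rule refl)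
lemma Cu_eq: "Cu X = topology (PCu X)" unfolding Cu_def PCu_def[abs_def] by (rule refl)
lemma Cp_eq: "Cp X = topology (PCp X)" unfolding Cp_def PCp_def[abs_def] by (rule refl)

lemma istop_Cm: "istopology (PCm X)"
  unfolding istopology_def
proof (intro conjI allI impI)
  fix S T assume S: "PCm X S" and T: "PCm X T"
  show "PCm X (S \<inter> T)"
    unfolding PCm_def
  proof (intro conjI ballI)
    show "S \<inter> T \<subseteq> Cfun X" using S unfolding PCm_def by blast
    fix f assume fST: "f \<in> S \<inter> T"
    obtain e1 where e1: "continuous_map X euclideanreal e1" "\<forall>x\<in>topspace X. e1 x > 0"
       "{g \<in> Cfun X. \<forall>x\<in>topspace X. \<bar>g x - f x\<bar> < e1 x} \<subseteq> S"
      using S fST unfolding PCm_def by blast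
    obtain e2 where e2: "continuous_map X euclideanreal e2" "\<forall>x\<in>topspace X. e2 x > 0"
       "{g \<in> Cfun X. \<forall>x\<in>topspace X. \<bar>g x - f x\<bar> < e2 x} \<subseteq> T"
      using T fST unfolding PCm_def by blast
    show "\<exists>\<epsilon>. continuous_map X euclideanreal \<epsilon> \<and>
      (\<forall>x\<in>topspace X. \<epsilon> x > 0) \<and> {g \<in> Cfun X. \<forall>x\<in>topspace X. \<bar>g x - f x\<bar> < \<epsilon> x} \<subseteq> S \<inter> T"
    proof (intro exI conjI)
      show "continuous_map X euclideanreal (\<lambda>x. min (e1 x) (e2 x))"
        using e1 e2 by (intro continuous_map_real_min)
      show "\<forall>x\<in>topspace X. 0 < min (e1 x) (e2 x)" using e1 e2 by simp
      show "{g \<in> Cfun X. \<forall>x\<in>topspace X. \<bar>g x - f x\<bar> < min (e1 x) (e2 x)} \<subseteq> S \<inter> T"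
        using e1(3) e2(3) by force
    qed
  qed
next
  fix K assume K: "\<forall>S\<in>K. PCm X S"
  show "PCm X (\<Union>K)"
    unfolding PCm_def
  proof (intro conjI ballI)
    show "\<Union>K \<subseteq> Cfun X" using K unfolding PCm_def by blast
    fix f assume "f \<in> \<Union>K"
    then obtain S where S: "S \<in> K" "f \<in> S" by auto
    have PS: "PCm X S" using K S by blast
    obtain e where e: "continuous_map X euclideanreal e" "\<forall>x\<in>topspace X. e x > 0"
       "{g \<in> Cfun X. \<forall>x\<in>topspace X. \<bar>g x - f x\<bar> < e x} \<subseteq> S"
      using PS S(2) unfolding PCm_def by blast
    show "\<exists>\<epsilon>. continuous_map X euclideanreal \<epsilon> \<and>
      (\<forall>x\<in>topspace X. \<epsilon> x > 0) \<and> {g \<in> Cfun X. \<forall>x\<in>topspace X. \<bar>g x - f x\<bar> < \<epsilon> x} \<subseteq> \<Union>K"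
      using e S by blast
  qed
qed

lemma istop_Cu: "istopology (PCu X)"
  unfolding istopology_def
proof (intro conjI allI impI)
  fix S T assume S: "PCu X S" and T: "PCu X T"
  show "PCu X (S \<inter> T)"
    unfolding PCu_def
  proof (intro conjI ballI)
    show "S \<inter> T \<subseteq> Cfun X" using S unfolding PCu_def by blast
    fix f assume fST: "f \<in> S \<inter> T"
    obtain e1 :: real where e1: "e1 > 0"
       "{g \<in> Cfun X. \<forall>x\<in>topspace X. \<bar>g x - f x\<bar> < e1} \<subseteq> S"
      using S fST unfolding PCu_def by blast
    obtain e2 :: real where e2: "e2 > 0"
       "{g \<in> Cfun X. \<forall>x\<in>topspace X. \<bar>g x - f x\<bar> < e2} \<subseteq> T"
      using T fST unfolding PCu_def by blast
    show "\<exists>\<epsilon>::real. \<epsilon> > 0 \<and> {g \<in> Cfun X. \<forall>x\<in>topspace X. \<bar>g x - f x\<bar> < \<epsilon>} \<subseteq> S \<inter> T"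
    proof (intro exI conjI)
      show "0 < min e1 e2" using e1 e2 by simp
      show "{g \<in> Cfun X. \<forall>x\<in>topspace X. \<bar>g x - f x\<bar> < min e1 e2} \<subseteq> S \<inter> T"
        using e1(2) e2(2) by force
    qed
  qed
next
  fix K assume K: "\<forall>S\<in>K. PCu X S"
  show "PCu X (\<Union>K)"
    unfolding PCu_def
  proof (intro conjI ballI)
    show "\<Union>K \<subseteq> Cfun X" using K unfolding PCu_def by blast
    fix f assume "f \<in> \<Union>K"
    then obtain S where S: "S \<in> K" "f \<in> S" by auto
    have PS: "PCu X S" using K S by blast
    obtain e :: real where e: "e > 0"
       "{g \<in> Cfun X. \<forall>x\<in>topspace X. \<bar>g x - f x\<bar> < e} \<subseteq> S"
      using PS S(2) unfolding PCu_def by blast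
    show "\<exists>\<epsilon>::real. \<epsilon> > 0 \<and> {g \<in> Cfun X. \<forall>x\<in>topspace X. \<bar>g x - f x\<bar> < \<epsilon>} \<subseteq> \<Union>K"
      using e S by blast
  qed
qed

lemma istop_Cp: "istopology (PCp X)"
  unfolding istopology_def
proof (intro conjI allI impI)
  fix S T assume S: "PCp X S" and T: "PCp X T"
  show "PCp X (S \<inter> T)"
    unfolding PCp_def
  proof (intro conjI ballI)
    show "S \<inter> T \<subseteq> Cfun X" using S unfolding PCp_def by blast
    fix f assume fST: "f \<in> S \<inter> T"
    obtain F1 and e1 :: real where e1: "finite F1" "F1 \<subseteq> topspace X" "e1 > 0"
       "{g \<in> Cfun X. \<forall>x\<in>F1. \<bar>g x - f x\<bar> < e1} \<subseteq> S"
      using S fST unfolding PCp_def by blast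
    obtain F2 and e2 :: real where e2: "finite F2" "F2 \<subseteq> topspace X" "e2 > 0"
       "{g \<in> Cfun X. \<forall>x\<in>F2. \<bar>g x - f x\<bar> < e2} \<subseteq> T"
      using T fST unfolding PCp_def by blast
    show "\<exists>F \<epsilon>. finite F \<and> F \<subseteq> topspace X \<and> \<epsilon> > (0::real) \<and>
      {g \<in> Cfun X. \<forall>x\<in>F. \<bar>g x - f x\<bar> < \<epsilon>} \<subseteq> S \<inter> T"
    proof (intro exI conjI)
      show "finite (F1 \<union> F2)" "F1 \<union> F2 \<subseteq> topspace X" using e1 e2 by auto
      show "0 < min e1 e2" using e1 e2 by simp
      show "{g \<in> Cfun X. \<forall>x\<in>F1 \<union> F2. \<bar>g x - f x\<bar> < min e1 e2} \<subseteq> S \<inter> T"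
        using e1(4) e2(4) by force
    qed
  qed
next
  fix K assume K: "\<forall>S\<in>K. PCp X S"
  show "PCp X (\<Union>K)"
    unfolding PCp_def
  proof (intro conjI ballI)
    show "\<Union>K \<subseteq> Cfun X" using K unfolding PCp_def by blast
    fix f assume "f \<in> \<Union>K"
    then obtain S where S: "S \<in> K" "f \<in> S" by auto
    have PS: "PCp X S" using K S by blast
    obtain F and e :: real where e: "finite F" "F \<subseteq> topspace X" "e > 0"
       "{g \<in> Cfun X. \<forall>x\<in>F. \<bar>g x - f x\<bar> < e} \<subseteq> S"
      using PS S(2) unfolding PCp_def by blast
    show "\<exists>F \<epsilon>. finite F \<and> F \<subseteq> topspace X \<and> \<epsilon> > (0::real) \<and>
      {g \<in> Cfun X. \<forall>x\<in>F. \<bar>g x - f x\<bar> < \<epsilon>} \<subseteq> \<Union>K"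
      using e S by blast
  qed
qed

lemma openin_Cm: "openin (Cm X) U \<longleftrightarrow> PCm X U"
  by (simp add: Cm_eq istop_Cm)
lemma openin_Cu: "openin (Cu X) U \<longleftrightarrow> PCu X U"
  by (simp add: Cu_eq istop_Cu)
lemma openin_Cp: "openin (Cp X) U \<longleftrightarrow> PCp X U"
  by (simp add: Cp_eq istop_Cp)

lemma Cfun_open_Cm: "openin (Cm X) (Cfun X)"
  unfolding openin_Cm PCm_def by (intro conjI ballI exI[of _ "\<lambda>x. 1"]) auto

lemma Cfun_open_Cu: "openin (Cu X) (Cfun X)"
  unfolding openin_Cu PCu_def by (intro conjI ballI exI[of _ "1::real"]) auto

lemma Cfun_open_Cp: "openin (Cp X) (Cfun X)"
  unfolding openin_Cp PCp_def by (intro conjI ballI exI[of _ "{}"] exI[of _ "1::real"]) auto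

lemma topspace_Cm[simp]: "topspace (Cm X) = Cfun X"
proof
  show "topspace (Cm X) \<subseteq> Cfun X" unfolding topspace_def openin_Cm PCm_def by blast
  show "Cfun X \<subseteq> topspace (Cm X)" using openin_subset[OF Cfun_open_Cm] .
qed
lemma topspace_Cu[simp]: "topspace (Cu X) = Cfun X"
proof
  show "topspace (Cu X) \<subseteq> Cfun X" unfolding topspace_def openin_Cu PCu_def by blast
  show "Cfun X \<subseteq> topspace (Cu X)" using openin_subset[OF Cfun_open_Cu] .
qed
lemma topspace_Cp[simp]: "topspace (Cp X) = Cfun X"
proof
  show "topspace (Cp X) \<subseteq> Cfun X" unfolding topspace_def openin_Cp PCp_def by blast
  show "Cfun X \<subseteq> topspace (Cp X)" using openin_subset[OF Cfun_open_Cp] .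
qed

lemma Cu_open_Cm: "openin (Cu X) U \<Longrightarrow> openin (Cm X) U"
  unfolding openin_Cu openin_Cm PCu_def PCm_def
proof (elim conjE, intro conjI ballI)
  fix f assume U: "U \<subseteq> Cfun X" "\<forall>f\<in>U. \<exists>\<epsilon>::real. 0 < \<epsilon> \<and> {g \<in> Cfun X. \<forall>x\<in>topspace X. \<bar>g x - f x\<bar> < \<epsilon>} \<subseteq> U"
    and f: "f \<in> U"
  from U(2) f obtain e::real where e: "0 < e" "{g \<in> Cfun X. \<forall>x\<in>topspace X. \<bar>g x - f x\<bar> < e} \<subseteq> U"
    by (meson bspec)
  show "\<exists>\<epsilon>. continuous_map X euclideanreal \<epsilon> \<and> (\<forall>x\<in>topspace X. 0 < \<epsilon> x) \<and> {g \<in> Cfun X. \<forall>x\<in>topspace X. \<bar>g x - f x\<bar> < \<epsilon> x} \<subseteq> U"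
  proof (intro exI[of _ "\<lambda>x. e"] conjI)
    show "continuous_map X euclideanreal (\<lambda>x. e)" by simp
    show "\<forall>x\<in>topspace X. 0 < e" using e by simp
    show "{g \<in> Cfun X. \<forall>x\<in>topspace X. \<bar>g x - f x\<bar> < e} \<subseteq> U" using e(2) .
  qed
qed (rule order_refl)?

lemma Cp_open_Cm: "openin (Cp X) U \<Longrightarrow> openin (Cm X) U"
  unfolding openin_Cp openin_Cm PCp_def PCm_def
proof (elim conjE, intro conjI ballI)
  fix f assume U: "U \<subseteq> Cfun X" "\<forall>f\<in>U. \<exists>F \<epsilon>. finite F \<and> F \<subseteq> topspace X \<and> 0 < \<epsilon> \<and> {g \<in> Cfun X. \<forall>x\<in>F. \<bar>g x - f x\<bar> < \<epsilon>} \<subseteq> U"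
    and f: "f \<in> U"
  from U(2) f obtain F and e::real where e: "finite F" "F \<subseteq> topspace X" "0 < e" "{g \<in> Cfun X. \<forall>x\<in>F. \<bar>g x - f x\<bar> < e} \<subseteq> U"
    by (meson bspec)
  show "\<exists>\<epsilon>. continuous_map X euclideanreal \<epsilon> \<and> (\<forall>x\<in>topspace X. 0 < \<epsilon> x) \<and> {g \<in> Cfun X. \<forall>x\<in>topspace X. \<bar>g x - f x\<bar> < \<epsilon> x} \<subseteq> U"
  proof (intro exI[of _ "\<lambda>x. e"] conjI)
    show "continuous_map X euclideanreal (\<lambda>x. e)" by simp
    show "\<forall>x\<in>topspace X. 0 < e" using e by simp
    have "{g \<in> Cfun X. \<forall>x\<in>topspace X. \<bar>g x - f x\<bar> < e} \<subseteq> {g \<in> Cfun X. \<forall>x\<in>F. \<bar>g x - f x\<bar> < e}"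
      using e(2) by blast
    then show "{g \<in> Cfun X. \<forall>x\<in>topspace X. \<bar>g x - f x\<bar> < e} \<subseteq> U" using e(4) by (rule order_trans)
  qed
qed (rule order_refl)?


lemma cont_eps:
  assumes "\<And>x e. x \<in> topspace X \<Longrightarrow> e > 0 \<Longrightarrow> \<exists>U. openin X U \<and> x \<in> U \<and> (\<forall>y\<in>U. \<bar>f y - f x\<bar> < e)"
  shows "continuous_map X euclideanreal f"
  unfolding continuous_map_def
proof (intro conjI allI impI)
  show "f \<in> topspace X \<rightarrow> topspace euclideanreal" by simp
  fix V :: "real set" assume "openin euclideanreal V"
  then have V: "open V" by simp
  show "openin X {x \<in> topspace X. f x \<in> V}"
  proof (subst openin_subopen, intro ballI)
    fix x assume x: "x \<in> {x \<in> topspace X. f x \<in> V}"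
    then obtain e where e: "e > 0" "\<forall>x'. \<bar>x' - f x\<bar> < e \<longrightarrow> x' \<in> V"
      using V open_real by (metis (no_types, lifting) mem_Collect_eq)
    obtain U where U: "openin X U" "x \<in> U" "\<forall>y\<in>U. \<bar>f y - f x\<bar> < e"
      using assms[of x e] x e by auto
    show "\<exists>T. openin X T \<and> x \<in> T \<and> T \<subseteq> {x \<in> topspace X. f x \<in> V}"
      using U e openin_subset[OF U(1)] by (intro exI[of _ U]) auto
  qed
qed

lemma cont_eps_D:
  assumes "continuous_map X euclideanreal f" "x \<in> topspace X" "e > 0"
  shows "\<exists>U. openin X U \<and> x \<in> U \<and> (\<forall>y\<in>U. \<bar>f y - f x\<bar> < e)"
proof -
  from assms(1) have "\<forall>U. open U \<longrightarrow> openin X {x \<in> topspace X. f x \<in> U}"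
    unfolding continuous_map_def by simp
  then have "openin X {y \<in> topspace X. f y \<in> {f x - e <..< f x + e}}"
    by (meson open_greaterThanLessThan)
  then show ?thesis
    by (intro exI[of _ "{y \<in> topspace X. f y \<in> {f x - e <..< f x + e}}"]) (use assms in auto)
qed

lemma Cfun_cont: "f \<in> Cfun X \<Longrightarrow> continuous_map X euclideanreal f"
  unfolding Cfun_def by simp

lemma Cfun_out: "f \<in> Cfun X \<Longrightarrow> x \<notin> topspace X \<Longrightarrow> f x = 0"
  unfolding Cfun_def by simp

lemma Cfun_mk: "continuous_map X euclideanreal h \<Longrightarrow> (\<lambda>x. if x \<in> topspace X then h x else 0) \<in> Cfun X"
  unfolding Cfun_def by (auto elim: continuous_map_eq)

lemma Cfun_zero[simp]: "(0::'a\<Rightarrow>real) \<in> Cfun X"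
  unfolding Cfun_def zero_fun_def by simp

lemma Cfun_add: "f \<in> Cfun X \<Longrightarrow> g \<in> Cfun X \<Longrightarrow> f + g \<in> Cfun X"
  unfolding Cfun_def plus_fun_def by (auto intro: continuous_map_add)

lemma Cfun_diff: "f \<in> Cfun X \<Longrightarrow> g \<in> Cfun X \<Longrightarrow> (\<lambda>x. f x - g x) \<in> Cfun X"
  unfolding Cfun_def by (auto intro: continuous_map_diff)

lemma eval_cont_Cp:
  assumes "x \<in> topspace X"
  shows "continuous_map (Cp X) euclideanreal (\<lambda>f. f x)"
proof (rule cont_eps)
  fix f and e :: real assume f: "f \<in> topspace (Cp X)" and e: "e > 0"
  let ?U = "{g \<in> Cfun X. \<forall>y\<in>{x}. \<bar>g y - f y\<bar> < e}"
  have "openin (Cp X) ?U"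
    unfolding openin_Cp PCp_def
  proof (intro conjI ballI)
    show "?U \<subseteq> Cfun X" by blast
    fix g assume g: "g \<in> ?U"
    show "\<exists>F \<epsilon>. finite F \<and> F \<subseteq> topspace X \<and> 0 < \<epsilon> \<and> {h \<in> Cfun X. \<forall>x\<in>F. \<bar>h x - g x\<bar> < \<epsilon>} \<subseteq> ?U"
    proof (intro exI conjI)
      show "finite {x}" "{x} \<subseteq> topspace X" using assms by auto
      show "0 < e - \<bar>g x - f x\<bar>" using g by simp
      show "{h \<in> Cfun X. \<forall>y\<in>{x}. \<bar>h y - g y\<bar> < e - \<bar>g x - f x\<bar>} \<subseteq> ?U"
        by auto
    qed
  qed
  then show "\<exists>U. openin (Cp X) U \<and> f \<in> U \<and> (\<forall>y\<in>U. \<bar>y x - f x\<bar> < e)"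
    using f e by (intro exI[of _ ?U]) auto
qed

lemma compact_Cm_Cp:
  assumes "compactin (Cm X) K" shows "compactin (Cp X) K"
proof -
  have "continuous_map (Cm X) (Cp X) id"
    unfolding continuous_map_def
  proof (intro conjI allI impI)
    show "id \<in> topspace (Cm X) \<rightarrow> topspace (Cp X)" by simp
    fix U assume "openin (Cp X) U"
    moreover have "{x \<in> topspace (Cm X). id x \<in> U} = U"
      using openin_subset[OF \<open>openin (Cp X) U\<close>] by auto
    ultimately show "openin (Cm X) {x \<in> topspace (Cm X). id x \<in> U}"
      using Cp_open_Cm by auto
  qed
  from image_compactin[OF assms this] show ?thesis by simp
qed

lemma sigma_Cm_Cp: "sigma_compact (Cm X) \<Longrightarrow> sigma_compact (Cp X)"
  unfolding sigma_compact_def using compact_Cm_Cp by (metis topspace_Cm topspace_Cp)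

lemma nbhd0_Cu_Cm: "nbhd0 (Cu X) U \<Longrightarrow> nbhd0 (Cm X) U"
  unfolding nbhd0_def using Cu_open_Cm by (metis topspace_Cm topspace_Cu)

lemma M_Cm_Cu: "M_bounded (Cm X) \<Longrightarrow> M_bounded (Cu X)"
  unfolding M_bounded_def using nbhd0_Cu_Cm by (metis topspace_Cm topspace_Cu)

lemma setplus_Cfun: "A \<subseteq> Cfun X \<Longrightarrow> U \<subseteq> Cfun X \<Longrightarrow> setplus A U \<subseteq> Cfun X"
  unfolding setplus_def using Cfun_add by blast

lemma nbhd0_sub: "nbhd0 G U \<Longrightarrow> U \<subseteq> topspace G"
  unfolding nbhd0_def by blast

lemma sH_H: assumes "strictly_H_bounded G" shows "H_bounded G"
proof -
  obtain \<sigma> where S: "\<And>U. (\<forall>n. nbhd0 G (U n)) \<Longrightarrow>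
       (\<forall>n. finite (\<sigma> (map U [0..<Suc n])) \<and> \<sigma> (map U [0..<Suc n]) \<subseteq> topspace G) \<and>
       (\<forall>x\<in>topspace G. \<forall>\<^sub>F n in sequentially. x \<in> setplus (\<sigma> (map U [0..<Suc n])) (U n))"
    using assms unfolding strictly_H_bounded_def by blast
  show ?thesis unfolding H_bounded_def
  proof (intro allI impI)
    fix U :: "nat \<Rightarrow> _" assume U: "\<forall>n. nbhd0 G (U n)"
    show "\<exists>A. (\<forall>n. finite (A n) \<and> A n \<subseteq> topspace G) \<and> (\<forall>x\<in>topspace G. \<forall>\<^sub>F n in sequentially. x \<in> setplus (A n) (U n))"
      using S[OF U] by (intro exI[of _ "\<lambda>n. \<sigma> (map U [0..<Suc n])"]) simp
  qed
qed

lemma H_M_Cm: assumes "H_bounded (Cm X)" shows "M_bounded (Cm X)"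
  unfolding M_bounded_def
proof (intro allI impI)
  fix U :: "nat \<Rightarrow> _" assume U: "\<forall>n. nbhd0 (Cm X) (U n)"
  obtain A where A: "\<forall>n. finite (A n) \<and> A n \<subseteq> topspace (Cm X)"
     "\<forall>x\<in>topspace (Cm X). \<forall>\<^sub>F n in sequentially. x \<in> setplus (A n) (U n)"
    using assms U unfolding H_bounded_def by meson
  show "\<exists>A. (\<forall>n. finite (A n) \<and> A n \<subseteq> topspace (Cm X)) \<and> topspace (Cm X) = (\<Union>n. setplus (A n) (U n))"
  proof (intro exI conjI)
    show "\<forall>n. finite (A n) \<and> A n \<subseteq> topspace (Cm X)" using A(1) .
    show "topspace (Cm X) = (\<Union>n. setplus (A n) (U n))"
    proof
      show "topspace (Cm X) \<subseteq> (\<Union>n. setplus (A n) (U n))"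
      proof
        fix x assume "x \<in> topspace (Cm X)"
        then have "\<forall>\<^sub>F n in sequentially. x \<in> setplus (A n) (U n)" using A(2) by blast
        then obtain n where "x \<in> setplus (A n) (U n)"
          unfolding eventually_sequentially by blast
        then show "x \<in> (\<Union>n. setplus (A n) (U n))" by blast
      qed
      have Us: "U n \<subseteq> Cfun X" for n using nbhd0_sub[OF U[rule_format, of n]] by simp
      have "\<And>n. setplus (A n) (U n) \<subseteq> Cfun X"
        using A(1) Us by (intro setplus_Cfun) auto
      then show "(\<Union>n. setplus (A n) (U n)) \<subseteq> topspace (Cm X)" by auto
    qed
  qed
qed

lemma sH_sM_Cm: assumes "strictly_H_bounded (Cm X)" shows "strictly_M_bounded (Cm X)"
proof -
  obtain \<sigma> where S: "\<And>U. (\<forall>n. nbhd0 (Cm X) (U n)) \<Longrightarrow>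
       (\<forall>n. finite (\<sigma> (map U [0..<Suc n])) \<and> \<sigma> (map U [0..<Suc n]) \<subseteq> topspace (Cm X)) \<and>
       (\<forall>x\<in>topspace (Cm X). \<forall>\<^sub>F n in sequentially. x \<in> setplus (\<sigma> (map U [0..<Suc n])) (U n))"
    using assms unfolding strictly_H_bounded_def by blast
  show ?thesis unfolding strictly_M_bounded_def
  proof (rule exI[of _ \<sigma>], intro allI impI, rule conjI)
    fix U :: "nat \<Rightarrow> ('a \<Rightarrow> real) set" assume U: "\<forall>n. nbhd0 (Cm X) (U n)"
    note SU = S[OF U]
    show "\<forall>n. finite (\<sigma> (map U [0..<Suc n])) \<and> \<sigma> (map U [0..<Suc n]) \<subseteq> topspace (Cm X)"
      using SU by blast
    show "topspace (Cm X) = (\<Union>n. setplus (\<sigma> (map U [0..<Suc n])) (U n))"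
    proof
      show "topspace (Cm X) \<subseteq> (\<Union>n. setplus (\<sigma> (map U [0..<Suc n])) (U n))"
      proof
        fix x assume "x \<in> topspace (Cm X)"
        then have "\<forall>\<^sub>F n in sequentially. x \<in> setplus (\<sigma> (map U [0..<Suc n])) (U n)"
          using SU by blast
        then obtain n where "x \<in> setplus (\<sigma> (map U [0..<Suc n])) (U n)"
          unfolding eventually_sequentially by blast
        then show "x \<in> (\<Union>n. setplus (\<sigma> (map U [0..<Suc n])) (U n))" by blast
      qed
      have Us: "U n \<subseteq> Cfun X" for n using nbhd0_sub[OF U[rule_format, of n]] by simp
      have "\<And>n. setplus (\<sigma> (map U [0..<Suc n])) (U n) \<subseteq> Cfun X"
        using SU Us by (intro setplus_Cfun) auto
      then show "(\<Union>n. setplus (\<sigma> (map U [0..<Suc n])) (U n)) \<subseteq> topspace (Cm X)" by auto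
    qed
  qed
qed


lemma small_pow:
  fixes r e :: real assumes "r > 0" "e > 0"
  shows "\<exists>M. r / 2^M < e"
proof -
  obtain M where "r / e < (2::real)^M" using real_arch_pow[of 2 "r/e"] by auto
  then have "r < e * 2^M" using assms by (simp add: divide_less_eq mult.commute)
  then show ?thesis using assms by (intro exI[of _ M]) (simp add: divide_less_eq)
qed

lemma nest:
  fixes Q :: "nat \<Rightarrow> ('a\<Rightarrow>real) \<Rightarrow> real \<Rightarrow> ('a\<Rightarrow>real) \<Rightarrow> real \<Rightarrow> bool"
  assumes step: "\<And>n f r. f \<in> Cfun X \<Longrightarrow> r > 0 \<Longrightarrow> \<exists>g r'. g \<in> Cfun X \<and> 0 < r' \<and> r' \<le> r/2 \<and>
      (\<forall>x\<in>topspace X. \<bar>g x - f x\<bar> + r' \<le> r) \<and> Q n f r g r'"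
  assumes f0: "f0 \<in> Cfun X" and r0: "r0 > 0"
  shows "\<exists>F fs rs. F \<in> Cfun X \<and> fs 0 = f0 \<and> rs 0 = r0 \<and>
     (\<forall>n. Q n (fs n) (rs n) (fs (Suc n)) (rs (Suc n))) \<and>
     (\<forall>n. \<forall>x\<in>topspace X. \<bar>F x - fs n x\<bar> \<le> rs n)"
proof -
  define P where "P n p q \<longleftrightarrow> fst q \<in> Cfun X \<and> 0 < snd q \<and> snd q \<le> snd p/2 \<and>
      (\<forall>x\<in>topspace X. \<bar>fst q x - fst p x\<bar> + snd q \<le> snd p) \<and> Q n (fst p) (snd p) (fst q) (snd q)"
    for n p q
  define nxt where "nxt n p = (SOME q. P n p q)" for n p
  define seq where "seq = rec_nat (f0, r0) nxt"
  have seq0: "seq 0 = (f0, r0)" unfolding seq_def by simp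
  have seqS: "seq (Suc n) = nxt n (seq n)" for n unfolding seq_def by simp
  have Pex: "fst p \<in> Cfun X \<Longrightarrow> snd p > 0 \<Longrightarrow> P n p (nxt n p)" for n p
  proof -
    assume "fst p \<in> Cfun X" "snd p > 0"
    from step[OF this, of n] obtain g r' where "g \<in> Cfun X \<and> 0 < r' \<and> r' \<le> snd p/2 \<and>
      (\<forall>x\<in>topspace X. \<bar>g x - fst p x\<bar> + r' \<le> snd p) \<and> Q n (fst p) (snd p) g r'" by blast
    then have "P n p (g, r')" unfolding P_def by simp
    then show ?thesis unfolding nxt_def by (rule someI)
  qed
  have inv: "fst (seq n) \<in> Cfun X \<and> snd (seq n) > 0" for n
  proof (induction n)
    case 0 then show ?case using seq0 f0 r0 by simp
  next
    case (Suc n)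
    then have "P n (seq n) (seq (Suc n))" using Pex seqS by simp
    then show ?case unfolding P_def by simp
  qed
  have PS: "P n (seq n) (seq (Suc n))" for n using Pex inv seqS by simp
  define fs where "fs n = fst (seq n)" for n
  define rs where "rs n = snd (seq n)" for n
  have fsC: "fs n \<in> Cfun X" and rspos: "rs n > 0" for n using inv fs_def rs_def by auto
  have rs_le: "rs n \<le> r0 / 2^n" for n
  proof (induction n)
    case 0 then show ?case using seq0 rs_def by simp
  next
    case (Suc n)
    have "rs (Suc n) \<le> rs n / 2" using PS[of n] unfolding P_def rs_def by simp
    also have "\<dots> \<le> r0 / 2^n / 2" using Suc by simp
    finally show ?case by simp
  qed
  have stepb: "\<forall>x\<in>topspace X. \<bar>fs (Suc n) x - fs n x\<bar> + rs (Suc n) \<le> rs n" for n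
    using PS[of n] unfolding P_def fs_def rs_def by simp
  have nested: "\<forall>x\<in>topspace X. \<bar>fs m x - fs n x\<bar> + rs m \<le> rs n" if "n \<le> m" for m n
    using that
  proof (induction m rule: dec_induct)
    case base then show ?case by simp
  next
    case (step m)
    show ?case
    proof
      fix x assume x: "x \<in> topspace X"
      have "\<bar>fs (Suc m) x - fs n x\<bar> \<le> \<bar>fs (Suc m) x - fs m x\<bar> + \<bar>fs m x - fs n x\<bar>" by simp
      then show "\<bar>fs (Suc m) x - fs n x\<bar> + rs (Suc m) \<le> rs n"
        using step.IH x stepb[of m] by force
    qed
  qed
  have conv: "convergent (\<lambda>n. fs n x)" if x: "x \<in> topspace X" for x
  proof -
    have "Cauchy (\<lambda>n. fs n x)"
    proof (rule CauchyI)
      fix e :: real assume e: "0 < e"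
      obtain M where M: "r0 / 2^M < e/2" using small_pow[OF r0, of "e/2"] e by auto
      show "\<exists>M. \<forall>m\<ge>M. \<forall>n\<ge>M. norm (fs m x - fs n x) < e"
      proof (intro exI allI impI)
        fix m n assume "M \<le> m" "M \<le> n"
        then have "\<bar>fs m x - fs M x\<bar> \<le> rs M" "\<bar>fs n x - fs M x\<bar> \<le> rs M"
          using nested x rspos by (smt (verit))+
        then have "\<bar>fs m x - fs n x\<bar> \<le> 2 * rs M" by simp
        also have "\<dots> < e" using rs_le[of M] M by (smt (verit, best) field_sum_of_halves)
        finally show "norm (fs m x - fs n x) < e" by simp
      qed
    qed
    then show ?thesis by (simp add: Cauchy_convergent_iff)
  qed
  define F where "F x = (if x \<in> topspace X then lim (\<lambda>n. fs n x) else 0)" for x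
  have Flim: "(\<lambda>n. fs n x) \<longlonglongrightarrow> F x" if "x \<in> topspace X" for x
    using conv[OF that] that unfolding F_def by (simp add: convergent_LIMSEQ_iff)
  have Fb: "\<bar>F x - fs n x\<bar> \<le> rs n" if x: "x \<in> topspace X" for x n
  proof -
    have b: "\<forall>m\<ge>n. fs m x \<le> fs n x + rs n \<and> fs n x - rs n \<le> fs m x"
      using nested x rspos by (smt (verit))
    have "F x \<le> fs n x + rs n"
      by (rule LIMSEQ_le_const2[OF Flim[OF x]]) (use b in blast)
    moreover have "fs n x - rs n \<le> F x"
      by (rule LIMSEQ_le_const[OF Flim[OF x]]) (use b in blast)
    ultimately show ?thesis by simp
  qed
  have Fcont: "continuous_map X euclideanreal F"
  proof (rule cont_eps)
    fix x and e :: real assume x: "x \<in> topspace X" and e: "e > 0"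
    obtain n where n: "r0 / 2^n < e/3" using small_pow[OF r0, of "e/3"] e by auto
    have rn: "rs n < e/3" using rs_le[of n] n by linarith
    obtain U where U: "openin X U" "x \<in> U" "\<forall>y\<in>U. \<bar>fs n y - fs n x\<bar> < e/3"
      using cont_eps_D[OF Cfun_cont[OF fsC[of n]] x, of "e/3"] e by auto
    show "\<exists>U. openin X U \<and> x \<in> U \<and> (\<forall>y\<in>U. \<bar>F y - F x\<bar> < e)"
    proof (intro exI conjI ballI)
      fix y assume y: "y \<in> U"
      then have yt: "y \<in> topspace X" using openin_subset[OF U(1)] by auto
      show "\<bar>F y - F x\<bar> < e"
        using Fb[OF yt, of n] Fb[OF x, of n] U(3)[rule_format, OF y] rn by linarith
    qed (use U in auto)
  qed
  have FC: "F \<in> Cfun X" unfolding Cfun_def using Fcont F_def by simp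
  show ?thesis
  proof (intro exI conjI allI)
    show "F \<in> Cfun X" by (rule FC)
    show "fs 0 = f0" "rs 0 = r0" using seq0 fs_def rs_def by auto
    show "Q n (fs n) (rs n) (fs (Suc n)) (rs (Suc n))" for n
      using PS[of n] unfolding P_def fs_def rs_def by simp
    show "\<forall>x\<in>topspace X. \<bar>F x - fs n x\<bar> \<le> rs n" for n using Fb by auto
  qed
qed


lemma interp:
  assumes cr: "completely_regular_space X" and hs: "Hausdorff_space X"
  shows "finite I \<Longrightarrow> inj_on pt I \<Longrightarrow> pt ` I \<subseteq> topspace X \<Longrightarrow> \<forall>i\<in>I. \<bar>c i\<bar> \<le> (1::real) \<Longrightarrow>
    \<exists>\<phi>. continuous_map X euclideanreal \<phi> \<and> (\<forall>x. \<bar>\<phi> x\<bar> \<le> 1) \<and> (\<forall>i\<in>I. \<phi> (pt i) = c i)"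
proof (induction I rule: finite_induct)
  case empty
  then show ?case by (intro exI[of _ "\<lambda>x. 0"]) simp
next
  case (insert i I)
  then obtain \<phi> where \<phi>: "continuous_map X euclideanreal \<phi>" "\<forall>x. \<bar>\<phi> x\<bar> \<le> 1" "\<forall>j\<in>I. \<phi> (pt j) = c j"
    by auto
  have t1: "t1_space X" using hs by (rule Hausdorff_imp_t1_space)
  have C: "closedin X (pt ` I)"
    using t1 insert by (simp add: t1_space_closedin_finite)
  have P: "pt i \<in> topspace X - pt ` I" using insert by auto
  obtain f where f: "continuous_map X euclideanreal f" "f (pt i) = 0" "f ` (pt ` I) \<subseteq> {1}"
    using cr[unfolded completely_regular_space_alt, rule_format, OF C P] by blast
  define \<psi> where "\<psi> x = max (-1) (min 1 (\<phi> x + (c i - \<phi> (pt i)) * (1 - f x)))" for x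
  show ?case
  proof (intro exI conjI)
    show "continuous_map X euclideanreal \<psi>"
      unfolding \<psi>_def using \<phi>(1) f(1) by (intro continuous_intros) auto
    show "\<forall>x. \<bar>\<psi> x\<bar> \<le> 1" unfolding \<psi>_def by auto
    show "\<forall>j\<in>insert i I. \<psi> (pt j) = c j"
    proof
      fix j assume j: "j \<in> insert i I"
      show "\<psi> (pt j) = c j"
      proof (cases "j = i")
        case True then show ?thesis unfolding \<psi>_def using f(2) insert.prems(3) by auto
      next
        case False
        then have "j \<in> I" using j by simp
        then have "f (pt j) = 1" "\<phi> (pt j) = c j" using f(3) \<phi>(3) by auto
        then show ?thesis unfolding \<psi>_def using insert.prems(3) \<open>j \<in> I\<close> by auto
      qed
    qed
  qed
qed

lemma inj_points:
  assumes "finite A" "infinite S"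
  shows "\<exists>pt. inj_on pt A \<and> pt ` A \<subseteq> S"
proof -
  obtain B where B: "finite B" "card B = card A" "B \<subseteq> S"
    using infinite_arbitrarily_large[OF assms(2)] by blast
  obtain h where "bij_betw h A B" using finite_same_card_bij[OF assms(1) B(1) B(2)[symmetric]] by blast
  then show ?thesis using B(3) unfolding bij_betw_def by blast
qed

lemma perturb:
  assumes cr: "completely_regular_space X" and hs: "Hausdorff_space X"
    and inf: "infinite (topspace X)" and f: "f \<in> Cfun X" and rho: "\<rho> > 0" and A: "finite A"
  shows "\<exists>g\<in>Cfun X. (\<forall>x\<in>topspace X. \<bar>g x - f x\<bar> \<le> \<rho>/2) \<and> (\<forall>a\<in>A. \<exists>x\<in>topspace X. \<bar>g x - a x\<bar> \<ge> \<rho>/2)"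
proof -
  obtain pt where pt: "inj_on pt A" "pt ` A \<subseteq> topspace X" using inj_points[OF A inf] by blast
  define c where "c a = (if a (pt a) - f (pt a) \<ge> 0 then -1 else (1::real))" for a
  have cb: "\<forall>a\<in>A. \<bar>c a\<bar> \<le> 1" unfolding c_def by simp
  obtain \<phi> where \<phi>: "continuous_map X euclideanreal \<phi>" "\<forall>x. \<bar>\<phi> x\<bar> \<le> 1" "\<forall>a\<in>A. \<phi> (pt a) = c a"
    using interp[OF cr hs A pt cb] by blast
  define g where "g x = (if x \<in> topspace X then f x + \<rho>/2 * \<phi> x else 0)" for x
  have gC: "g \<in> Cfun X"
    unfolding g_def using \<phi>(1) Cfun_cont[OF f] by (intro Cfun_mk continuous_intros)
  show ?thesis
  proof (rule bexI[of _ g], rule conjI)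
    show "g \<in> Cfun X" by (rule gC)
    show "\<forall>x\<in>topspace X. \<bar>g x - f x\<bar> \<le> \<rho>/2"
    proof
    fix x assume "x \<in> topspace X"
    then have "\<bar>g x - f x\<bar> = \<rho>/2 * \<bar>\<phi> x\<bar>" unfolding g_def using rho by (simp add: abs_mult)
    also have "\<dots> \<le> \<rho>/2" using \<phi>(2) rho by (simp add: mult_le_cancel_left1)
    finally show "\<bar>g x - f x\<bar> \<le> \<rho>/2" .
    qed
    show "\<forall>a\<in>A. \<exists>x\<in>topspace X. \<bar>g x - a x\<bar> \<ge> \<rho>/2"
    proof
    fix a assume a: "a \<in> A"
    have pa: "pt a \<in> topspace X" using pt a by auto
    have "\<bar>g (pt a) - a (pt a)\<bar> \<ge> \<rho>/2"
      using \<phi>(3) a pa rho unfolding g_def c_def by auto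
    then show "\<exists>x\<in>topspace X. \<rho>/2 \<le> \<bar>g x - a x\<bar>" using pa by blast
    qed
  qed
qed


definition Vd :: "'a topology \<Rightarrow> real \<Rightarrow> ('a\<Rightarrow>real) set" where
  "Vd X \<delta> = {g \<in> Cfun X. \<exists>s<\<delta>. \<forall>x\<in>topspace X. \<bar>g x\<bar> \<le> s}"

lemma Vd_open_Cu:
  assumes "\<delta> > 0" shows "openin (Cu X) (Vd X \<delta>)"
  unfolding openin_Cu PCu_def
proof (intro conjI ballI)
  show "Vd X \<delta> \<subseteq> Cfun X" unfolding Vd_def by blast
  fix g assume "g \<in> Vd X \<delta>"
  then obtain s where s: "s < \<delta>" "\<forall>x\<in>topspace X. \<bar>g x\<bar> \<le> s" unfolding Vd_def by blast
  show "\<exists>\<epsilon>>0. {h \<in> Cfun X. \<forall>x\<in>topspace X. \<bar>h x - g x\<bar> < \<epsilon>} \<subseteq> Vd X \<delta>"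
  proof (intro exI conjI)
    show "0 < (\<delta> - s)/2" using s by simp
    show "{h \<in> Cfun X. \<forall>x\<in>topspace X. \<bar>h x - g x\<bar> < (\<delta> - s)/2} \<subseteq> Vd X \<delta>"
    proof
      fix h assume h: "h \<in> {h \<in> Cfun X. \<forall>x\<in>topspace X. \<bar>h x - g x\<bar> < (\<delta> - s)/2}"
      have "\<forall>x\<in>topspace X. \<bar>h x\<bar> \<le> s + (\<delta> - s)/2"
      proof
        fix x assume x: "x \<in> topspace X"
        have "\<bar>h x - g x\<bar> < (\<delta> - s)/2" using h x by blast
        moreover have "\<bar>g x\<bar> \<le> s" using s x by blast
        ultimately show "\<bar>h x\<bar> \<le> s + (\<delta> - s)/2" by linarith
      qed
      moreover have "s + (\<delta> - s)/2 < \<delta>" using s(1) by (simp add: field_simps)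
      ultimately show "h \<in> Vd X \<delta>" using h unfolding Vd_def by blast
    qed
  qed
qed

lemma Vd_open_Cm: "\<delta> > 0 \<Longrightarrow> openin (Cm X) (Vd X \<delta>)"
  using Vd_open_Cu Cu_open_Cm by blast

lemma M_inf_False:
  fixes T :: "('a \<Rightarrow> real) topology"
  assumes cr: "completely_regular_space X" and hs: "Hausdorff_space X"
    and inf: "infinite (topspace X)" and top: "topspace T = Cfun X"
    and op: "\<And>\<delta>. \<delta> > 0 \<Longrightarrow> openin T (Vd X \<delta>)" and M: "M_bounded T"
  shows False
proof -
  define U where "U n = Vd X (1/16^(Suc n))" for n :: nat
  have nb: "nbhd0 T (U n)" for n
    unfolding nbhd0_def
  proof (intro conjI exI)
    show "U n \<subseteq> topspace T" unfolding U_def Vd_def top by blast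
    show "openin T (U n)" unfolding U_def by (rule op) simp
    show "0 \<in> U n" unfolding U_def Vd_def by (auto intro!: exI[of _ 0])
  qed (rule order_refl)
  obtain A where A: "\<forall>n. finite (A n) \<and> A n \<subseteq> topspace T" "topspace T = (\<Union>n. setplus (A n) (U n))"
    using M nb unfolding M_bounded_def by meson
  define Q where "Q n f r g r' \<longleftrightarrow> r' = r/16 \<and> (\<forall>h. (\<forall>x\<in>topspace X. \<bar>h x - g x\<bar> \<le> r') \<longrightarrow>
       (\<forall>a\<in>A n. \<exists>x\<in>topspace X. \<bar>h x - a x\<bar> \<ge> r'))"
    for n and f :: "'a \<Rightarrow> real" and r and g :: "'a \<Rightarrow> real" and r'
  have step: "\<exists>g r'. g \<in> Cfun X \<and> 0 < r' \<and> r' \<le> r/2 \<and>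
      (\<forall>x\<in>topspace X. \<bar>g x - f x\<bar> + r' \<le> r) \<and> Q n f r g r'"
    if f: "f \<in> Cfun X" and r: "r > 0" for n f r
  proof -
    obtain g where g: "g \<in> Cfun X" "\<forall>x\<in>topspace X. \<bar>g x - f x\<bar> \<le> r/2"
      "\<forall>a\<in>A n. \<exists>x\<in>topspace X. \<bar>g x - a x\<bar> \<ge> r/2"
      using perturb[OF cr hs inf f r, of "A n"] A(1) by blast
    show ?thesis
    proof (intro exI conjI)
      show "g \<in> Cfun X" by (rule g(1))
      show "0 < r/16" "r/16 \<le> r/2" using r by auto
      show "\<forall>x\<in>topspace X. \<bar>g x - f x\<bar> + r/16 \<le> r" using g(2) r by force
      show "Q n f r g (r/16)"
        unfolding Q_def
      proof (intro conjI refl allI impI ballI)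
        fix h a assume h: "\<forall>x\<in>topspace X. \<bar>h x - g x\<bar> \<le> r/16" and a: "a \<in> A n"
        then obtain x where x: "x \<in> topspace X" "\<bar>g x - a x\<bar> \<ge> r/2" using g(3) by blast
        have "\<bar>h x - g x\<bar> \<le> r/16" using h x by blast
        then have "\<bar>h x - a x\<bar> \<ge> r/16" using x(2) r by linarith
        then show "\<exists>x\<in>topspace X. r/16 \<le> \<bar>h x - a x\<bar>" using x(1) by blast
      qed
    qed
  qed
  obtain F fs rs where N: "F \<in> Cfun X" "fs 0 = 0" "rs 0 = 1"
     "\<forall>n. Q n (fs n) (rs n) (fs (Suc n)) (rs (Suc n))"
     "\<forall>n. \<forall>x\<in>topspace X. \<bar>F x - fs n x\<bar> \<le> rs n"
    using nest[of X Q 0 1, OF step] by auto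
  have rsn: "rs n = 1/16^n" for n
  proof (induction n)
    case 0 then show ?case using N(3) by simp
  next
    case (Suc n)
    have "rs (Suc n) = rs n / 16" using N(4) unfolding Q_def by blast
    then show ?case using Suc by simp
  qed
  have "F \<in> topspace T" using N(1) top by simp
  then obtain n where "F \<in> setplus (A n) (U n)" using A(2) by blast
  then obtain a u where au: "a \<in> A n" "u \<in> U n" "F = a + u" unfolding setplus_def by blast
  have QF: "\<forall>a\<in>A n. \<exists>x\<in>topspace X. \<bar>F x - a x\<bar> \<ge> rs (Suc n)"
    using spec[OF N(4), of n] spec[OF N(5), of "Suc n"] unfolding Q_def by blast
  then obtain x where x: "x \<in> topspace X" "\<bar>F x - a x\<bar> \<ge> 1/16^(Suc n)"
    using au(1) rsn by metis
  obtain s where s: "s < 1/16^(Suc n)" "\<forall>x\<in>topspace X. \<bar>u x\<bar> \<le> s"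
    using au(2) unfolding U_def Vd_def by blast
  have "F x - a x = u x" using au(3) by simp
  then show False using x s by force
qed


lemma Hausdorff_Cp: "Hausdorff_space (Cp X)"
  unfolding Hausdorff_space_def
proof (intro allI impI)
  fix f g assume fg: "f \<in> topspace (Cp X) \<and> g \<in> topspace (Cp X) \<and> f \<noteq> g"
  then have fC: "f \<in> Cfun X" and gC: "g \<in> Cfun X" by auto
  obtain z where z: "f z \<noteq> g z" using fg by (meson ext)
  have zt: "z \<in> topspace X"
  proof (rule ccontr)
    assume "z \<notin> topspace X"
    then show False using z Cfun_out[OF fC] Cfun_out[OF gC] by simp
  qed
  define d where "d = \<bar>f z - g z\<bar> / 2"
  have d: "d > 0" using z unfolding d_def by simp
  have ev: "continuous_map (Cp X) euclideanreal (\<lambda>h. h z)" using eval_cont_Cp[OF zt] .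
  define U where "U = {h \<in> topspace (Cp X). h z \<in> ball (f z) d}"
  define V where "V = {h \<in> topspace (Cp X). h z \<in> ball (g z) d}"
  have "openin (Cp X) U" unfolding U_def using ev by (rule openin_continuous_map_preimage) simp
  moreover have "openin (Cp X) V" unfolding V_def using ev by (rule openin_continuous_map_preimage) simp
  moreover have "f \<in> U" "g \<in> V" unfolding U_def V_def using fg d by auto
  moreover have "disjnt U V"
  proof -
    have "h \<notin> V" if "h \<in> U" for h
    proof
      assume "h \<in> V"
      then have "dist (g z) (h z) < d" "dist (f z) (h z) < d" using that unfolding U_def V_def by auto
      then have "\<bar>f z - g z\<bar> < 2 * d" unfolding dist_real_def by linarith
      then show False unfolding d_def by simp
    qed
    then show ?thesis unfolding disjnt_def by blast
  qed
  ultimately show "\<exists>U V. openin (Cp X) U \<and> openin (Cp X) V \<and> f \<in> U \<and> g \<in> V \<and> disjnt U V" by blast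
qed

lemma sigma_Cp_discrete_False:
  assumes disc: "\<forall>x\<in>topspace X. openin X {x}" and inf: "infinite (topspace X)"
    and sc: "sigma_compact (Cp X)"
  shows False
proof -
  obtain K :: "nat \<Rightarrow> ('a \<Rightarrow> real) set" where K1: "\<forall>n. compactin (Cp X) (K n)" and K2': "topspace (Cp X) = (\<Union>n. K n)"
    using sc unfolding sigma_compact_def by meson
  have K2: "Cfun X = (\<Union>n. K n)" using K2' by simp
  note K = spec[OF K1] K2
  obtain xs :: "nat \<Rightarrow> 'a" where xs: "inj xs" "range xs \<subseteq> topspace X"
    using infinite_countable_subset[OF inf] by blast
  have bd: "\<exists>M. \<forall>h\<in>K n. \<bar>h (xs n)\<bar> \<le> M" for n
  proof -
    have "xs n \<in> topspace X" using xs by auto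
    from image_compactin[OF K(1)[of n] eval_cont_Cp[OF this]]
    have "compact ((\<lambda>h. h (xs n)) ` K n)" by simp
    then have "bounded ((\<lambda>h. h (xs n)) ` K n)" by (rule compact_imp_bounded)
    then obtain M where "\<forall>y\<in>(\<lambda>h. h (xs n)) ` K n. norm y \<le> M" unfolding bounded_iff by blast
    then show ?thesis by auto
  qed
  define M where "M n = (SOME M. \<forall>h\<in>K n. \<bar>h (xs n)\<bar> \<le> M)" for n
  have M: "\<forall>h\<in>K n. \<bar>h (xs n)\<bar> \<le> M n" for n unfolding M_def using bd[of n] by (rule someI_ex)
  define f where "f x = (if x \<in> range xs then M (inv xs x) + 1 else 0)" for x
  have dt: "X = discrete_topology (topspace X)"
    using disc discrete_topology_unique by metis
  have "continuous_map X euclideanreal f"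
    by (subst dt) simp
  moreover have "\<forall>x. x \<notin> topspace X \<longrightarrow> f x = 0" unfolding f_def using xs by auto
  ultimately have "f \<in> Cfun X" unfolding Cfun_def by simp
  then obtain n where "f \<in> K n" using K(2) by blast
  then have "\<bar>f (xs n)\<bar> \<le> M n" using M by blast
  moreover have "f (xs n) = M n + 1" unfolding f_def using xs(1) by simp
  ultimately show False by simp
qed

lemma escape:
  assumes cr: "completely_regular_space X" and hs: "Hausdorff_space X"
    and p: "p \<in> topspace X" "\<not> openin X {p}"
    and K: "compactin (Cp X) K" and f: "f \<in> Cfun X" and r: "r > 0"
  shows "\<exists>g\<in>Cfun X. (\<forall>x\<in>topspace X. \<bar>g x - f x\<bar> \<le> r) \<and> g \<notin> K"
proof (rule ccontr)
  assume "\<not> ?thesis"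
  then have all: "\<And>g. g \<in> Cfun X \<Longrightarrow> (\<forall>x\<in>topspace X. \<bar>g x - f x\<bar> \<le> r) \<Longrightarrow> g \<in> K" by blast
  define C where "C = {h \<in> topspace (Cp X). h p \<in> {f p}}"
  define D where "D x = {h \<in> topspace (Cp X). h x \<in> {f x + r}}" for x
  define \<U> where "\<U> = insert C (D ` (topspace X - {p}))"
  have clC: "closedin (Cp X) C" unfolding C_def
    by (rule closedin_continuous_map_preimage[OF eval_cont_Cp[OF p(1)]]) simp
  have clD: "closedin (Cp X) (D x)" if "x \<in> topspace X" for x unfolding D_def
    by (rule closedin_continuous_map_preimage[OF eval_cont_Cp[OF that]]) simp
  have t1: "t1_space X" using hs by (rule Hausdorff_imp_t1_space)
  have "K \<inter> \<Inter>\<U> \<noteq> {}"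
  proof (rule compactin_fip[THEN iffD1, OF K, THEN conjunct2, rule_format], intro conjI allI impI)
    show "\<forall>C\<in>\<U>. closedin (Cp X) C" unfolding \<U>_def using clC clD by auto
    fix \<F> assume F: "finite \<F> \<and> \<F> \<subseteq> \<U>"
    have "\<F> - {C} \<subseteq> D ` (topspace X - {p})" using F unfolding \<U>_def by auto
    then obtain S where S: "S \<subseteq> topspace X - {p}" "finite S" "\<F> - {C} = D ` S"
      using finite_subset_image[of "\<F> - {C}"] F by (metis finite_Diff)
    have "S \<subseteq> topspace X" using S(1) by blast
    then have Scl: "closedin X S" using t1 S(2) unfolding t1_space_closedin_finite by blast
    have pS: "p \<in> topspace X - S" using S p by auto
    obtain \<phi> :: "'a \<Rightarrow> real" where \<phi>: "continuous_map X (top_of_set {0..1}) \<phi>" "\<phi> p = 0" "\<phi> ` S \<subseteq> {1}"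
      using cr[unfolded completely_regular_space_def, rule_format, OF conjI[OF Scl pS]] by meson
    have \<phi>c: "continuous_map X euclideanreal \<phi>" and \<phi>r: "\<forall>x\<in>topspace X. \<phi> x \<in> {0..1}"
      using \<phi>(1) unfolding continuous_map_in_subtopology by auto
    define g where "g x = (if x \<in> topspace X then f x + r * \<phi> x else 0)" for x
    have gC: "g \<in> Cfun X" unfolding g_def using \<phi>c Cfun_cont[OF f] by (intro Cfun_mk continuous_intros)
    have "\<forall>x\<in>topspace X. \<bar>g x - f x\<bar> \<le> r"
    proof
      fix x assume x: "x \<in> topspace X"
      have "\<bar>g x - f x\<bar> = r * \<phi> x" unfolding g_def using x \<phi>r r by auto
      also have "\<dots> \<le> r" using \<phi>r x r by (simp add: mult_le_cancel_left1)
      finally show "\<bar>g x - f x\<bar> \<le> r" .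
    qed
    then have gK: "g \<in> K" using all gC by blast
    have "g p = f p" using p \<phi>(2) by (simp add: g_def)
    then have "g \<in> C" unfolding C_def using gC by simp
    moreover have "g \<in> D x" if "x \<in> S" for x
    proof -
      have x1: "x \<in> topspace X" using that S(1) by blast
      have x2: "\<phi> x = 1" using \<phi>(3) that by (simp add: image_subset_iff)
      from x1 x2 have "g x = f x + r" by (simp add: g_def)
      then show ?thesis unfolding D_def using gC by simp
    qed
    ultimately have "g \<in> \<Inter>\<F>" using S(3) by blast
    then show "K \<inter> \<Inter>\<F> \<noteq> {}" using gK by blast
  qed
  then obtain h where h: "h \<in> K" "h \<in> C" "\<And>x. x \<in> topspace X - {p} \<Longrightarrow> h \<in> D x"
    unfolding \<U>_def by blast
  have hC: "h \<in> Cfun X" using h(1) compactin_subset_topspace[OF K] by auto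
  have hp: "h p = f p" using h(2) unfolding C_def by simp
  have hx: "h x = f x + r" if "x \<in> topspace X" "x \<noteq> p" for x using h(3)[of x] that unfolding D_def by simp
  have cont: "continuous_map X euclideanreal (\<lambda>x. h x - f x)"
    using Cfun_cont[OF hC] Cfun_cont[OF f] by (intro continuous_intros)
  have "openin X {x \<in> topspace X. h x - f x \<in> {..<r/2}}"
    by (rule openin_continuous_map_preimage[OF cont]) simp
  moreover have "{x \<in> topspace X. h x - f x \<in> {..<r/2}} = {p}"
  proof
    show "{x \<in> topspace X. h x - f x \<in> {..<r/2}} \<subseteq> {p}"
    proof
      fix x assume x: "x \<in> {x \<in> topspace X. h x - f x \<in> {..<r/2}}"
      show "x \<in> {p}"
      proof (rule ccontr)
        assume "x \<notin> {p}"
        then have "h x = f x + r" using hx x by auto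
        then show False using x r by simp
      qed
    qed
    show "{p} \<subseteq> {x \<in> topspace X. h x - f x \<in> {..<r/2}}" using p hp r by auto
  qed
  ultimately show False using p(2) by simp
qed

lemma sigma_Cp_nondiscrete_False:
  assumes cr: "completely_regular_space X" and hs: "Hausdorff_space X"
    and p: "p \<in> topspace X" "\<not> openin X {p}"
    and sc: "sigma_compact (Cp X)"
  shows False
proof -
  obtain K :: "nat \<Rightarrow> ('a \<Rightarrow> real) set" where K1: "\<forall>n. compactin (Cp X) (K n)" and K2': "topspace (Cp X) = (\<Union>n. K n)"
    using sc unfolding sigma_compact_def by meson
  have K2: "Cfun X = (\<Union>n. K n)" using K2' by simp
  note K = spec[OF K1] K2
  define Q where "Q n (f :: 'a \<Rightarrow> real) (r::real) g r' \<longleftrightarrow> (\<forall>h\<in>Cfun X. (\<forall>x\<in>topspace X. \<bar>h x - g x\<bar> \<le> r') \<longrightarrow> h \<notin> K n)"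
    for n f r g r'
  have step: "\<exists>g r'. g \<in> Cfun X \<and> 0 < r' \<and> r' \<le> r/2 \<and>
      (\<forall>x\<in>topspace X. \<bar>g x - f x\<bar> + r' \<le> r) \<and> Q n f r g r'"
    if f: "f \<in> Cfun X" and r: "r > 0" for n f r
  proof -
    obtain g where g: "g \<in> Cfun X" "\<forall>x\<in>topspace X. \<bar>g x - f x\<bar> \<le> r/2" "g \<notin> K n"
      using escape[OF cr hs p K(1)[of n] f, of "r/2"] r by auto
    have "closedin (Cp X) (K n)" using compactin_imp_closedin[OF Hausdorff_Cp K(1)] .
    then have "openin (Cp X) (Cfun X - K n)" using openin_diff[OF Cfun_open_Cp] by blast
    moreover have "g \<in> Cfun X - K n" using g by blast
    ultimately obtain F e where Fe: "finite F" "F \<subseteq> topspace X" "0 < e"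
       "{h \<in> Cfun X. \<forall>x\<in>F. \<bar>h x - g x\<bar> < e} \<subseteq> Cfun X - K n"
      unfolding openin_Cp PCp_def by (meson bspec)
    show ?thesis
    proof (intro exI conjI)
      show "g \<in> Cfun X" by (rule g(1))
      show "0 < min (e/2) (r/4)" "min (e/2) (r/4) \<le> r/2" using Fe r by auto
      show "\<forall>x\<in>topspace X. \<bar>g x - f x\<bar> + min (e/2) (r/4) \<le> r"
      proof
        fix x assume "x \<in> topspace X"
        then have "\<bar>g x - f x\<bar> \<le> r/2" using g(2) by blast
        moreover have "min (e/2) (r/4) \<le> r/4" by simp
        ultimately show "\<bar>g x - f x\<bar> + min (e/2) (r/4) \<le> r" using r by linarith
      qed
      show "Q n f r g (min (e/2) (r/4))"
        unfolding Q_def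
      proof (intro ballI impI)
        fix h assume h: "h \<in> Cfun X" "\<forall>x\<in>topspace X. \<bar>h x - g x\<bar> \<le> min (e/2) (r/4)"
        have "\<forall>x\<in>F. \<bar>h x - g x\<bar> < e" using h(2) Fe(2,3) by force
        then show "h \<notin> K n" using Fe(4) h(1) by blast
      qed
    qed
  qed
  obtain F fs rs where N: "F \<in> Cfun X"
     "\<forall>n. Q n (fs n) (rs n) (fs (Suc n)) (rs (Suc n))"
     "\<forall>n. \<forall>x\<in>topspace X. \<bar>F x - fs n x\<bar> \<le> rs n"
    using nest[of X Q 0 1, OF step] by auto
  obtain n where "F \<in> K n" using N(1) K(2) by blast
  moreover have "F \<notin> K n"
    using spec[OF N(2), of n] spec[OF N(3), of "Suc n"] N(1) unfolding Q_def by blast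
  ultimately show False by blast
qed

lemma sigma_Cp_finite:
  assumes cr: "completely_regular_space X" and hs: "Hausdorff_space X"
    and sc: "sigma_compact (Cp X)"
  shows "finite (topspace X)"
proof (rule ccontr)
  assume inf: "infinite (topspace X)"
  show False
  proof (cases "\<forall>x\<in>topspace X. openin X {x}")
    case True
    show False by (rule sigma_Cp_discrete_False[OF True inf sc])
  next
    case False
    then obtain p where "p \<in> topspace X" "\<not> openin X {p}" by blast
    then show False using sigma_Cp_nondiscrete_False[OF cr hs _ _ sc] by blast
  qed
qed


lemma transl_open:
  assumes V: "openin (Cm X) V" and a: "a \<in> Cfun X"
  shows "openin (Cm X) {a + v | v. v \<in> V}"
  unfolding openin_Cm PCm_def
proof (intro conjI ballI)
  have VC: "V \<subseteq> Cfun X" using V unfolding openin_Cm PCm_def by blast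
  show "{a + v |v. v \<in> V} \<subseteq> Cfun X" using VC a Cfun_add by blast
  fix w assume "w \<in> {a + v |v. v \<in> V}"
  then obtain v where v: "v \<in> V" "w = a + v" by blast
  obtain \<epsilon> where e: "continuous_map X euclideanreal \<epsilon>" "\<forall>x\<in>topspace X. \<epsilon> x > 0"
     "{g \<in> Cfun X. \<forall>x\<in>topspace X. \<bar>g x - v x\<bar> < \<epsilon> x} \<subseteq> V"
    using bspec[OF conjunct2[OF V[unfolded openin_Cm PCm_def]] v(1)] by blast
  show "\<exists>\<epsilon>. continuous_map X euclideanreal \<epsilon> \<and> (\<forall>x\<in>topspace X. 0 < \<epsilon> x) \<and>
     {g \<in> Cfun X. \<forall>x\<in>topspace X. \<bar>g x - w x\<bar> < \<epsilon> x} \<subseteq> {a + v |v. v \<in> V}"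
  proof (intro exI conjI)
    show "continuous_map X euclideanreal \<epsilon>" "\<forall>x\<in>topspace X. 0 < \<epsilon> x" using e by auto
    show "{g \<in> Cfun X. \<forall>x\<in>topspace X. \<bar>g x - w x\<bar> < \<epsilon> x} \<subseteq> {a + v |v. v \<in> V}"
    proof
      fix g assume g: "g \<in> {g \<in> Cfun X. \<forall>x\<in>topspace X. \<bar>g x - w x\<bar> < \<epsilon> x}"
      define u where "u = (\<lambda>x. g x - a x)"
      have uC: "u \<in> Cfun X" unfolding u_def using g a Cfun_diff by blast
      have "\<forall>x\<in>topspace X. \<bar>u x - v x\<bar> < \<epsilon> x" using g v(2) unfolding u_def by auto
      then have "u \<in> V" using e(3) uC by blast
      moreover have "g = a + u" unfolding u_def by (simp add: fun_eq_iff)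
      ultimately show "g \<in> {a + v |v. v \<in> V}" by blast
    qed
  qed
qed

lemma compact_cover:
  assumes L: "compactin (Cm X) L" and U: "nbhd0 (Cm X) U"
  shows "\<exists>A. finite A \<and> A \<subseteq> Cfun X \<and> L \<subseteq> setplus A U"
proof -
  obtain V where V: "openin (Cm X) V" "0 \<in> V" "V \<subseteq> U" using U unfolding nbhd0_def by blast
  have LC: "L \<subseteq> Cfun X" using compactin_subset_topspace[OF L] by simp
  define T where "T a = {a + v | v. v \<in> V}" for a
  have "\<forall>S\<in>T ` L. openin (Cm X) S" using transl_open[OF V(1)] LC unfolding T_def by blast
  moreover have "L \<subseteq> \<Union>(T ` L)"
  proof
    fix a assume a: "a \<in> L"
    have "a = a + 0" by simp
    then have "a \<in> T a" unfolding T_def using V(2) by blast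
    then show "a \<in> \<Union>(T ` L)" using a by blast
  qed
  ultimately obtain \<F> where F: "finite \<F>" "\<F> \<subseteq> T ` L" "L \<subseteq> \<Union>\<F>"
    using L unfolding compactin_def by meson
  obtain A where A: "A \<subseteq> L" "finite A" "\<F> = T ` A" using finite_subset_image[OF F(1,2)] by blast
  have "L \<subseteq> setplus A U"
  proof
    fix x assume "x \<in> L"
    then obtain a where "a \<in> A" "x \<in> T a" using F(3) A(3) by blast
    then show "x \<in> setplus A U" unfolding T_def setplus_def using V(3) by blast
  qed
  then show ?thesis using A LC by blast
qed

lemma sigma_sH:
  assumes sc: "sigma_compact (Cm X)"
  shows "strictly_H_bounded (Cm X)"
proof -
  obtain K :: "nat \<Rightarrow> ('a \<Rightarrow> real) set" where K1: "\<forall>n. compactin (Cm X) (K n)"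
    and K2': "topspace (Cm X) = (\<Union>n. K n)"
    using sc unfolding sigma_compact_def by meson
  define L where "L n = \<Union>(K ` {..n})" for n
  have Lc: "compactin (Cm X) (L n)" for n
    unfolding L_def using K1 by (intro compactin_Union) auto
  define \<sigma> where "\<sigma> l = (SOME A. finite A \<and> A \<subseteq> Cfun X \<and> L (length l - 1) \<subseteq> setplus A (last l))"
    for l :: "('a \<Rightarrow> real) set list"
  show ?thesis unfolding strictly_H_bounded_def
  proof (rule exI[of _ \<sigma>], intro allI impI)
    fix U :: "nat \<Rightarrow> ('a \<Rightarrow> real) set" assume U: "\<forall>n. nbhd0 (Cm X) (U n)"
    have P: "finite (\<sigma> (map U [0..<Suc n])) \<and> \<sigma> (map U [0..<Suc n]) \<subseteq> Cfun X \<and>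
        L n \<subseteq> setplus (\<sigma> (map U [0..<Suc n])) (U n)" for n
    proof -
      have l: "length (map U [0..<Suc n]) - 1 = n" "last (map U [0..<Suc n]) = U n" by simp_all
      have "\<exists>A. finite A \<and> A \<subseteq> Cfun X \<and> L n \<subseteq> setplus A (U n)"
        using compact_cover[OF Lc spec[OF U, of n]] .
      then show ?thesis unfolding \<sigma>_def l by (rule someI_ex)
    qed
    show "(\<forall>n. finite (\<sigma> (map U [0..<Suc n])) \<and> \<sigma> (map U [0..<Suc n]) \<subseteq> topspace (Cm X)) \<and>
       (\<forall>x\<in>topspace (Cm X). \<forall>\<^sub>F n in sequentially. x \<in> setplus (\<sigma> (map U [0..<Suc n])) (U n))"
    proof (rule conjI)
      show "\<forall>n. finite (\<sigma> (map U [0..<Suc n])) \<and> \<sigma> (map U [0..<Suc n]) \<subseteq> topspace (Cm X)"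
        using P by simp
      show "\<forall>x\<in>topspace (Cm X). \<forall>\<^sub>F n in sequentially. x \<in> setplus (\<sigma> (map U [0..<Suc n])) (U n)"
      proof
        fix x assume "x \<in> topspace (Cm X)"
        then obtain m where m: "x \<in> K m" using K2' by blast
        show "\<forall>\<^sub>F n in sequentially. x \<in> setplus (\<sigma> (map U [0..<Suc n])) (U n)"
          unfolding eventually_sequentially
        proof (intro exI allI impI)
          fix n assume "m \<le> n"
          then have "x \<in> L n" using m unfolding L_def by auto
          then show "x \<in> setplus (\<sigma> (map U [0..<Suc n])) (U n)" using P by blast
        qed
      qed
    qed
  qed
qed


lemma finite_sigma_Cm:
  assumes hs: "Hausdorff_space X" and fin: "finite (topspace X)"
  shows "sigma_compact (Cm X)"
proof -
  define I where "I = topspace X"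
  have dt: "X = discrete_topology I"
    unfolding I_def using finite_t1_space_imp_discrete_topology[OF refl fin Hausdorff_imp_t1_space[OF hs]] .
  have allc: "continuous_map X euclideanreal h" for h :: "'a \<Rightarrow> real"
    by (subst dt) simp
  define \<phi> where "\<phi> g = (\<lambda>x. if x \<in> I then g x else 0)" for g :: "'a \<Rightarrow> real"
  let ?P = "product_topology (\<lambda>_. euclideanreal) I"
  have \<phi>C: "\<phi> g \<in> Cfun X" for g unfolding Cfun_def \<phi>_def I_def using allc by simp
  have cont: "continuous_map ?P (Cm X) \<phi>"
    unfolding continuous_map_def
  proof (intro conjI allI impI)
    show "\<phi> \<in> topspace ?P \<rightarrow> topspace (Cm X)" using \<phi>C by simp
    fix U assume U: "openin (Cm X) U"
    show "openin ?P {g \<in> topspace ?P. \<phi> g \<in> U}"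
      unfolding openin_product_topology_alt
    proof
      fix g assume g: "g \<in> {g \<in> topspace ?P. \<phi> g \<in> U}"
      obtain \<epsilon> where e: "continuous_map X euclideanreal \<epsilon>" "\<forall>x\<in>topspace X. \<epsilon> x > 0"
         "{h \<in> Cfun X. \<forall>x\<in>topspace X. \<bar>h x - \<phi> g x\<bar> < \<epsilon> x} \<subseteq> U"
        using bspec[OF conjunct2[OF U[unfolded openin_Cm PCm_def]], of "\<phi> g"] g by blast
      define e where "e = Min (insert 1 (\<epsilon> ` I))"
      have fI: "finite I" using fin I_def by simp
      have epos: "e > 0" unfolding e_def using fI e(2) I_def by (simp add: Min_gr_iff)
      have ele: "e \<le> \<epsilon> x" if "x \<in> I" for x unfolding e_def using fI that by (simp add: Min_le_iff)
      show "\<exists>V. finite {i \<in> I. V i \<noteq> topspace euclideanreal} \<and> (\<forall>i\<in>I. openin euclideanreal (V i)) \<and>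
            g \<in> Pi\<^sub>E I V \<and> Pi\<^sub>E I V \<subseteq> {g \<in> topspace ?P. \<phi> g \<in> U}"
      proof (intro exI conjI)
        show "finite {i \<in> I. ball (g i) e \<noteq> topspace euclideanreal}" using fI by simp
        show "\<forall>i\<in>I. openin euclideanreal (ball (g i) e)" by simp
        show "g \<in> (\<Pi>\<^sub>E i\<in>I. ball (g i) e)" using g epos by (auto simp: PiE_iff)
        show "(\<Pi>\<^sub>E i\<in>I. ball (g i) e) \<subseteq> {g \<in> topspace ?P. \<phi> g \<in> U}"
        proof
          fix h assume h: "h \<in> (\<Pi>\<^sub>E i\<in>I. ball (g i) e)"
          have "h \<in> topspace ?P" using h by (auto simp: PiE_iff)
          moreover have "\<forall>x\<in>topspace X. \<bar>\<phi> h x - \<phi> g x\<bar> < \<epsilon> x"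
          proof
            fix x assume x: "x \<in> topspace X"
            then have xI: "x \<in> I" using I_def by simp
            have "dist (g x) (h x) < e" using h xI by (auto simp: PiE_iff)
            then have "\<bar>h x - g x\<bar> < e" by (simp add: dist_real_def abs_minus_commute)
            then show "\<bar>\<phi> h x - \<phi> g x\<bar> < \<epsilon> x" using ele[OF xI] xI unfolding \<phi>_def by simp
          qed
          then have "\<phi> h \<in> U" using e(3) \<phi>C by blast
          ultimately show "h \<in> {g \<in> topspace ?P. \<phi> g \<in> U}" by blast
        qed
      qed
    qed
  qed
  define K where "K n = \<phi> ` (\<Pi>\<^sub>E i\<in>I. {- real n .. real n})" for n :: nat
  have Kc: "compactin (Cm X) (K n)" for n
    unfolding K_def
  proof (rule image_compactin[OF _ cont])
    show "compactin ?P (\<Pi>\<^sub>E i\<in>I. {- real n .. real n})"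
      by (simp add: compactin_PiE)
  qed
  have cov: "Cfun X \<subseteq> (\<Union>n. K n)"
  proof
    fix f assume f: "f \<in> Cfun X"
    define n where "n = nat \<lceil>\<Sum>x\<in>I. \<bar>f x\<bar>\<rceil>"
    have fI: "finite I" using fin I_def by simp
    have "\<bar>f x\<bar> \<le> real n" if "x \<in> I" for x
    proof -
      have "\<bar>f x\<bar> \<le> (\<Sum>x\<in>I. \<bar>f x\<bar>)" by (rule member_le_sum[OF that]) (simp_all add: fI)
      also have "\<dots> \<le> real n" unfolding n_def by linarith
      finally show ?thesis .
    qed
    then have "\<forall>i\<in>I. f i \<in> {- real n .. real n}" by (auto simp: abs_le_iff) (smt (verit))
    then have "restrict f I \<in> (\<Pi>\<^sub>E i\<in>I. {- real n .. real n})" by (auto simp: PiE_iff)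
    moreover have "\<phi> (restrict f I) = f"
      unfolding \<phi>_def using Cfun_out[OF f] I_def by (auto simp: fun_eq_iff)
    ultimately have "f \<in> K n" unfolding K_def by (metis image_eqI)
    then show "f \<in> (\<Union>n. K n)" by blast
  qed
  have "topspace (Cm X) = (\<Union>n. K n)"
    using cov Kc compactin_subset_topspace by fastforce
  then show ?thesis unfolding sigma_compact_def using Kc by blast
qed


lemma sM_M: assumes "strictly_M_bounded G" shows "M_bounded G"
proof -
  obtain \<sigma> where S: "\<And>U. (\<forall>n. nbhd0 G (U n)) \<Longrightarrow>
       (\<forall>n. finite (\<sigma> (map U [0..<Suc n])) \<and> \<sigma> (map U [0..<Suc n]) \<subseteq> topspace G) \<and>
       topspace G = (\<Union>n. setplus (\<sigma> (map U [0..<Suc n])) (U n))"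
    using assms unfolding strictly_M_bounded_def by blast
  show ?thesis unfolding M_bounded_def
  proof (intro allI impI)
    fix U :: "nat \<Rightarrow> _" assume U: "\<forall>n. nbhd0 G (U n)"
    show "\<exists>A. (\<forall>n. finite (A n) \<and> A n \<subseteq> topspace G) \<and> topspace G = (\<Union>n. setplus (A n) (U n))"
      by (rule exI[of _ "\<lambda>n. \<sigma> (map U [0..<Suc n])"], rule S[OF U])
  qed
qed

theorem theorem2p8:
  fixes X :: "'a topology"
  assumes "tychonoff_space X"
  shows "(sigma_compact (Cm X) \<longleftrightarrow> finite (topspace X))
       \<and> (strictly_H_bounded (Cm X) \<longleftrightarrow> finite (topspace X))
       \<and> (H_bounded (Cm X) \<longleftrightarrow> finite (topspace X))
       \<and> (strictly_M_bounded (Cm X) \<longleftrightarrow> finite (topspace X))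
       \<and> (M_bounded (Cm X) \<longleftrightarrow> finite (topspace X))
       \<and> (M_bounded (Cu X) \<longleftrightarrow> finite (topspace X))
       \<and> (sigma_compact (Cp X) \<longleftrightarrow> finite (topspace X))"
proof -
  have cr: "completely_regular_space X" and hs: "Hausdorff_space X"
    using assms unfolding tychonoff_space_def by auto
  have Mfin: "finite (topspace X)" if "M_bounded (Cm X)"
  proof (rule ccontr)
    assume "infinite (topspace X)"
    from M_inf_False[OF cr hs this topspace_Cm Vd_open_Cm that] show False .
  qed
  have Mufin: "finite (topspace X)" if "M_bounded (Cu X)"
  proof (rule ccontr)
    assume "infinite (topspace X)"
    from M_inf_False[OF cr hs this topspace_Cu Vd_open_Cu that] show False .
  qed
  have Cpfin: "finite (topspace X)" if "sigma_compact (Cp X)"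
    using sigma_Cp_finite[OF cr hs that] .
  have fin_sc: "sigma_compact (Cm X)" if "finite (topspace X)"
    using finite_sigma_Cm[OF hs that] .
  have sc_sH: "strictly_H_bounded (Cm X)" if "sigma_compact (Cm X)" using sigma_sH[OF that] .
  have sH_Hb: "H_bounded (Cm X)" if "strictly_H_bounded (Cm X)" using sH_H[OF that] .
  have Hb_M: "M_bounded (Cm X)" if "H_bounded (Cm X)" using H_M_Cm[OF that] .
  have sH_sMb: "strictly_M_bounded (Cm X)" if "strictly_H_bounded (Cm X)" using sH_sM_Cm[OF that] .
  have sM_Mb: "M_bounded (Cm X)" if "strictly_M_bounded (Cm X)" using sM_M[OF that] .
  have M_Mu: "M_bounded (Cu X)" if "M_bounded (Cm X)" using M_Cm_Cu[OF that] .
  have sc_Cp: "sigma_compact (Cp X)" if "sigma_compact (Cm X)" using sigma_Cm_Cp[OF that] .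
  show ?thesis
    by (meson Mfin Mufin Cpfin fin_sc sc_sH sH_Hb Hb_M sH_sMb sM_Mb M_Mu sc_Cp)
qed


end
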